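(* Let $(E_i(0),\,i\in\mathcal S)$ be any initial energy configuration with $0\le E_i(0)\le\overline E_i$. Let $\mathcal S'=\{i\in\mathcal S:E_i(0)<\overline E_i\}$ and $u_0=\min_{i\in\mathcal S'}E_i(0)/P_i$ (with $u_0=\infty$ if $\mathcal S'=\emptyset$). Let $\mathcal S_1=\{i\in\mathcal S:\overline E_i/P_i\le u_0\}$, $\mathcal S_2=\mathcal S\setminus\mathcal S_1$, and $k=\sum_{i\in\mathcal S_2}P_i$. Let $T>0$ and let $(d(t),\,t\in[0,T])$ be a nonnegative, integrable, weakly increasing demand function with $d(0)\ge k$. If some cross-charging policy completely serves $d$ on $[0,T]$ from this initial configuration, then $d$ can also be completely served on $[0,T]$ from this initial configuration by a policy without cross-charging.
   Context: A finite set $\mathcal S$ of energy stores is given. Store $i\in\mathcal S$ has capacity $\overline E_i>0$, maximum discharge rate $P_i>0$, maximum charge rate $P'_i\ge0$ and round-trip efficiency $\eta_i\in(0,1]$. A cross-charging policy is a choice of measurable rate functions $(r_i(t),\,t\ge0)$ with $E_i(t)=E_i(0)-\int_0^t r_i(u)\,du$, subject to $0\le E_i(t)\le\overline E_i$, $-P'_i\le r_i(t)\le P_i$, and $$0\le\sum_{i:\,r_i(t)\ge0}r_i(t)+\sum_{i:\,r_i(t)<0}r_i(t)/\eta_i\le d(t)\quad\text{for all }t$$ (negative $r_i$ means store $i$ is charged, drawing energy at rate $-r_i/\eta_i$ from other stores; no external energy is available). It completely serves $d$ on an interval $I$ if the middle expression equals $d(t)$ for almost every $t\in I$. A policy with all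 $r_i(t)\ge0$ is one without cross-charging. *)

theory Defs
  imports "HOL-Analysis.Analysis"
begin

definition energy :: "('a \<Rightarrow> real) \<Rightarrow> ('a \<Rightarrow> real \<Rightarrow> real) \<Rightarrow> 'a \<Rightarrow> real \<Rightarrow> real" where
  "energy E0 r i t = E0 i - integral {0..t} (r i)"

definition served :: "'a set \<Rightarrow> ('a \<Rightarrow> real) \<Rightarrow> ('a \<Rightarrow> real \<Rightarrow> real) \<Rightarrow> real \<Rightarrow> real" where
  "served S eta r t = (\<Sum>i\<in>S. if r i t \<ge> 0 then r i t else r i t / eta i)"

definition policy ::
  "'a set \<Rightarrow> ('a \<Rightarrow> real) \<Rightarrow> ('a \<Rightarrow> real) \<Rightarrow> ('a \<Rightarrow> real) \<Rightarrow> ('a \<Rightarrow> real)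
   \<Rightarrow> ('a \<Rightarrow> real) \<Rightarrow> (real \<Rightarrow> real) \<Rightarrow> real \<Rightarrow> ('a \<Rightarrow> real \<Rightarrow> real) \<Rightarrow> bool" where
  "policy S Ebar P P' eta E0 d T r \<longleftrightarrow>
     (\<forall>i\<in>S. r i \<in> borel_measurable lebesgue) \<and>
     (\<forall>i\<in>S. \<forall>t\<in>{0..T}. 0 \<le> energy E0 r i t \<and> energy E0 r i t \<le> Ebar i) \<and>
     (\<forall>i\<in>S. \<forall>t\<in>{0..T}. - P' i \<le> r i t \<and> r i t \<le> P i) \<and>
     (\<forall>t\<in>{0..T}. 0 \<le> served S eta r t \<and> served S eta r t \<le> d t)"

definition completely_serves ::
  "'a set \<Rightarrow> ('a \<Rightarrow> real) \<Rightarrow> ('a \<Rightarrow> real \<Rightarrow> real) \<Rightarrow> (real \<Rightarrow> real) \<Rightarrow> real set \<Rightarrow> bool" where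
  "completely_serves S eta r d I \<longleftrightarrow> (AE t in lebesgue. t \<in> I \<longrightarrow> served S eta r t = d t)"

definition no_cross_charging :: "'a set \<Rightarrow> ('a \<Rightarrow> real \<Rightarrow> real) \<Rightarrow> real \<Rightarrow> bool" where
  "no_cross_charging S r T \<longleftrightarrow> (\<forall>i\<in>S. \<forall>t\<in>{0..T}. 0 \<le> r i t)"

end

theory Submission
  imports Defs
begin

lemma int_le_const_upto:
  fixes f :: "real \<Rightarrow> real"
  assumes "f integrable_on {a..b}" "a \<le> b" "\<forall>t\<in>{a..<b}. f t \<le> K"
  shows "integral {a..b} f \<le> K * (b - a)"
proof -
  let ?g = "\<lambda>t. if t = b then K else f t"
  have "integral {a..b} f = integral {a..b} ?g"
    by (rule integral_spike[of "{b}"]) auto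
  moreover have "?g integrable_on {a..b}"
    by (rule integrable_spike[OF assms(1), of "{b}"]) auto
  moreover have "integral {a..b} ?g \<le> integral {a..b} (\<lambda>_. K)"
    by (rule integral_le[OF calculation(2)]) (use assms in auto)
  ultimately show ?thesis using assms(2) by (simp add: mult.commute)
qed

lemma int_ge_const_from:
  fixes f :: "real \<Rightarrow> real"
  assumes "f integrable_on {a..b}" "a \<le> b" "\<forall>t\<in>{a<..b}. K \<le> f t"
  shows "K * (b - a) \<le> integral {a..b} f"
proof -
  let ?g = "\<lambda>t. if t = a then K else f t"
  have "integral {a..b} f = integral {a..b} ?g"
    by (rule integral_spike[of "{a}"]) auto
  moreover have "?g integrable_on {a..b}"
    by (rule integrable_spike[OF assms(1), of "{a}"]) auto
  moreover have "integral {a..b} (\<lambda>_. K) \<le> integral {a..b} ?g"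
    by (rule integral_le[OF _ calculation(2)]) (use assms in auto)
  ultimately show ?thesis using assms(2) by (simp add: mult.commute)
qed

lemma int_eq_from:
  fixes f :: "real \<Rightarrow> real"
  assumes "\<forall>t\<in>{a<..b}. f t = g t"
  shows "integral {a..b} f = integral {a..b} g"
  by (rule integral_spike[of "{a}"]) (use assms in auto)

lemma int_eq_upto:
  fixes f :: "real \<Rightarrow> real"
  assumes "\<forall>t\<in>{a..<b}. f t = g t"
  shows "integral {a..b} f = integral {a..b} g"
  by (rule integral_spike[of "{b}"]) (use assms in auto)

lemma mono_int:
  fixes f :: "real \<Rightarrow> real"
  assumes "mono_on {0..T} f" "0 \<le> a" "b \<le> T"
  shows "f integrable_on {a..b}"
  by (rule integrable_on_mono_on) (rule mono_on_subset[OF assms(1)], use assms in auto)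


lemma residual_cond:
  fixes f rr FA :: "real \<Rightarrow> real"
  assumes T: "0 \<le> T" and fm: "mono_on {0..T} f"
    and P: "0 < P" and c: "0 \<le> c" and E: "0 \<le> E"
    and rr_def: "rr = (\<lambda>t. min P (max 0 (f t - c)))"
    and FAmono: "\<And>x y. 0 \<le> x \<Longrightarrow> x \<le> y \<Longrightarrow> FA x \<le> FA y"
    and FAconc: "\<And>x y l. 0 \<le> x \<Longrightarrow> x \<le> y \<Longrightarrow> 0 \<le> l \<Longrightarrow> l \<le> 1 \<Longrightarrow>
                  l * FA y + (1 - l) * FA x \<le> FA (l * y + (1 - l) * x)"
    and H: "\<forall>s\<in>{0..T}. integral {s..T} f \<le> FA (T - s) + min (P * (T - s)) E"
    and G1: "integral {0..T} rr \<le> E" and G2: "0 < c \<Longrightarrow> integral {0..T} rr = E"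
  shows "\<forall>s\<in>{0..T}. integral {s..T} (\<lambda>t. f t - rr t) \<le> FA (T - s)"
proof -
  define fr where "fr = (\<lambda>t. f t - rr t)"
  have rrm: "mono_on {0..T} rr"
    using fm unfolding rr_def mono_on_def by (smt (verit))
  have hmono: "u - min P (max 0 (u - c)) \<le> v - min P (max 0 (v - c))" if "u \<le> v" for u v
    using that by (auto simp: min_def max_def)
  have frm: "mono_on {0..T} fr"
    using fm hmono unfolding fr_def rr_def mono_on_def by blast
  have fi: "f integrable_on {a..b}" if "0 \<le> a" "b \<le> T" for a b
    using mono_int[OF fm that] .
  have rri: "rr integrable_on {a..b}" if "0 \<le> a" "b \<le> T" for a b
    using mono_int[OF rrm that] .
  have fri: "fr integrable_on {a..b}" if "0 \<le> a" "b \<le> T" for a b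
    using mono_int[OF frm that] .
  define sig where "sig \<theta> = Inf ({t\<in>{0..T}. \<theta> < f t} \<union> {T})" for \<theta>
  have bdd: "bdd_below ({t\<in>{0..T}. \<theta> < f t} \<union> {T})" for \<theta>
    by (rule bdd_belowI[of _ 0]) (use T in auto)
  have sig_le: "sig \<theta> \<le> T" for \<theta>
    unfolding sig_def by (rule cInf_lower[OF _ bdd]) auto
  have sig_ge: "0 \<le> sig \<theta>" for \<theta>
    unfolding sig_def by (rule cInf_greatest) (use T in auto)
  have sig_below: "f t \<le> \<theta>" if "t \<in> {0..T}" "t < sig \<theta>" for t \<theta>
  proof (rule ccontr)
    assume "\<not> f t \<le> \<theta>"
    then have "t \<in> {t\<in>{0..T}. \<theta> < f t} \<union> {T}" using that by auto
    then have "sig \<theta> \<le> t" unfolding sig_def by (rule cInf_lower[OF _ bdd])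
    then show False using that by simp
  qed
  have sig_above: "\<theta> < f t" if "t \<in> {0..T}" "sig \<theta> < t" for t \<theta>
  proof -
    have "\<exists>x\<in>{t\<in>{0..T}. \<theta> < f t} \<union> {T}. x < t"
      using that unfolding sig_def by (subst (asm) cInf_less_iff[OF _ bdd]) auto
    then obtain x where x: "x \<in> {t\<in>{0..T}. \<theta> < f t} \<union> {T}" "x < t" by blast
    then have "x \<noteq> T" using that by auto
    then have "x \<in> {0..T}" "\<theta> < f x" using x by auto
    moreover have "f x \<le> f t" using fm calculation(1) that(1) x(2) by (auto intro: mono_onD)
    ultimately show ?thesis by simp
  qed
  define s1 where "s1 = sig c"
  define s2 where "s2 = sig (c + P)"
  have s12: "s1 \<le> s2"
    unfolding s1_def s2_def sig_def
    by (rule cInf_superset_mono) (use P bdd in auto)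
  have pa: "fr t \<le> c" if "t \<in> {0..T}" "t < s2" for t
    using sig_below[OF that[unfolded s2_def]] unfolding fr_def rr_def by (auto simp: min_def max_def)
  have pb: "fr t = f t - P" if "t \<in> {0..T}" "s2 < t" for t
    using sig_above[OF that[unfolded s2_def]] unfolding fr_def rr_def by (auto simp: min_def max_def)
  have pc: "rr t = 0" if "t \<in> {0..T}" "t < s1" for t
    using sig_below[OF that[unfolded s1_def]] using P unfolding rr_def by (auto simp: min_def max_def)
  have pd: "c \<le> fr t" if "t \<in> {0..T}" "s1 < t" for t
    using sig_above[OF that[unfolded s1_def]] unfolding fr_def rr_def by (auto simp: min_def max_def)
  have s1T: "0 \<le> s1" "s1 \<le> T" "0 \<le> s2" "s2 \<le> T"
    unfolding s1_def s2_def using sig_le sig_ge by auto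
  have boundA: "integral {s..T} fr \<le> c * (max s s2 - s) + FA (T - max s s2)"
    if s: "s \<in> {0..T}" for s
  proof -
    define m where "m = max s s2"
    have m: "s \<le> m" "m \<le> T" using s s1T unfolding m_def by auto
    have "integral {s..T} fr = integral {s..m} fr + integral {m..T} fr"
      using Henstock_Kurzweil_Integration.integral_combine[OF m fri[of s T]] s by simp
    moreover have "integral {s..m} fr \<le> c * (m - s)"
    proof (rule int_le_const_upto[OF fri m(1)])
      show "0 \<le> s" "m \<le> T" using s m by auto
      show "\<forall>t\<in>{s..<m}. fr t \<le> c"
      proof
        fix t assume t: "t \<in> {s..<m}"
        then have "t < s2" unfolding m_def by auto
        then show "fr t \<le> c" using pa t m s by auto
      qed
    qed
    moreover have "integral {m..T} fr = integral {m..T} (\<lambda>t. f t - P)"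
      by (rule int_eq_from) (use pb m s in \<open>auto simp: m_def\<close>)
    moreover have "integral {m..T} (\<lambda>t. f t - P) = integral {m..T} f - P * (T - m)"
      using fi[of m T] m s by (subst integral_diff) (auto simp: mult.commute)
    moreover have "integral {m..T} f \<le> FA (T - m) + min (P * (T - m)) E"
      using H m s by auto
    ultimately show ?thesis unfolding m_def[symmetric] by linarith
  qed
  have boundC: "integral {s..T} fr \<le> FA (T - s)" if s: "s \<in> {0..T}" "s \<le> s1" "0 < c" for s
  proof -
    have "integral {0..T} rr = integral {0..s} rr + integral {s..T} rr"
      using Henstock_Kurzweil_Integration.integral_combine[of 0 s T rr] s rri[of 0 T] T by simp
    moreover have "integral {0..s} rr = integral {0..s} (\<lambda>_. 0)"
      by (rule int_eq_upto) (use pc s in auto)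
    ultimately have "integral {s..T} rr = E" using G2 s by simp
    moreover have "integral {s..T} fr = integral {s..T} f - integral {s..T} rr"
      unfolding fr_def using fi[of s T] rri[of s T] s by (subst integral_diff) auto
    moreover have "integral {s..T} f \<le> FA (T - s) + min (P * (T - s)) E"
      using H s by auto
    ultimately show ?thesis by linarith
  qed
  show ?thesis
  proof
    fix s assume s: "s \<in> {0..T}"
    have goal: "integral {s..T} fr \<le> FA (T - s)"
    proof (cases "c = 0")
      case True
      have "integral {s..T} fr \<le> FA (T - max s s2)" using boundA[OF s] True by simp
      also have "\<dots> \<le> FA (T - s)" by (rule FAmono) (use s s1T in auto)
      finally show ?thesis .
    next
      case False
      then have cpos: "0 < c" using c by simp
      show ?thesis
      proof (cases "s \<le> s1")
        case True
        then show ?thesis using boundC s cpos by blast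
      next
        case ns1: False
        show ?thesis
        proof (cases "s2 \<le> s")
          case True
          then show ?thesis using boundA[OF s] by simp
        next
          case False
          then have ss: "s1 < s" "s < s2" using ns1 by auto
          define I where "I = integral {s..T} fr"
          have A: "I \<le> c * (s2 - s) + FA (T - s2)" using boundA[OF s] ss unfolding I_def by simp
          have C1: "integral {s1..T} fr \<le> FA (T - s1)" using boundC[of s1] s1T cpos by auto
          have "integral {s1..T} fr = integral {s1..s} fr + I"
            unfolding I_def using Henstock_Kurzweil_Integration.integral_combine[of s1 s T fr] ss s fri[of s1 T] s1T
            by simp
          moreover have "c * (s - s1) \<le> integral {s1..s} fr"
            by (rule int_ge_const_from[OF fri]) (use ss s s1T pd in auto)
          ultimately have B: "I \<le> FA (T - s1) - c * (s - s1)" using C1 by linarith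
          define l where "l = (s2 - s) / (s2 - s1)"
          have l: "0 \<le> l" "l \<le> 1" using ss unfolding l_def by (auto simp: field_simps)
          have e: "l * (s2 - s1) = s2 - s" unfolding l_def using ss by simp
          have "l * (T - s1) + (1 - l) * (T - s2) = T - s2 + l * (s2 - s1)"
            by (simp add: algebra_simps)
          then have ly: "l * (T - s1) + (1 - l) * (T - s2) = T - s" using e by simp
          have lc: "l * (s - s1) = (1 - l) * (s2 - s)"
            using ss unfolding l_def by (auto simp: field_simps)
          have "l * I \<le> l * (FA (T - s1) - c * (s - s1))" by (rule mult_left_mono[OF B l(1)])
          moreover have "(1 - l) * I \<le> (1 - l) * (c * (s2 - s) + FA (T - s2))"
            by (rule mult_left_mono[OF A]) (use l in auto)
          ultimately have "I \<le> l * FA (T - s1) + (1 - l) * FA (T - s2) + c * ((1 - l) * (s2 - s) - l * (s - s1))"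
            by (auto simp: algebra_simps)
          also have "\<dots> = l * FA (T - s1) + (1 - l) * FA (T - s2)" using lc by simp
          also have "\<dots> \<le> FA (l * (T - s1) + (1 - l) * (T - s2))"
            by (rule FAconc) (use l s1T s12 in auto)
          finally show ?thesis unfolding I_def ly .
        qed
      qed
    qed
    then show "integral {s..T} (\<lambda>t. f t - rr t) \<le> FA (T - s)" unfolding fr_def .
  qed
qed


definition FS :: "('a \<Rightarrow> real) \<Rightarrow> ('a \<Rightarrow> real) \<Rightarrow> 'a set \<Rightarrow> real \<Rightarrow> real" where
  "FS P E A b = (\<Sum>i\<in>A. min (P i * b) (E i))"

lemma FS_mono:
  assumes "\<forall>i\<in>A. 0 < P i" "0 \<le> x" "x \<le> y"
  shows "FS P E A x \<le> FS P E A y"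
  unfolding FS_def
proof (rule sum_mono)
  fix i assume "i \<in> A"
  then have "P i * x \<le> P i * y" using assms by (auto intro: mult_left_mono)
  then show "min (P i * x) (E i) \<le> min (P i * y) (E i)" by linarith
qed

lemma FS_conc:
  assumes "0 \<le> l" "l \<le> 1"
  shows "l * FS P E A y + (1 - l) * FS P E A x \<le> FS P E A (l * y + (1 - l) * x)"
proof -
  have "l * FS P E A y + (1 - l) * FS P E A x
        = (\<Sum>i\<in>A. l * min (P i * y) (E i) + (1 - l) * min (P i * x) (E i))"
    unfolding FS_def by (simp add: sum_distrib_left sum.distrib)
  also have "\<dots> \<le> FS P E A (l * y + (1 - l) * x)"
    unfolding FS_def
  proof (rule sum_mono)
    fix i
    have l1: "0 \<le> 1 - l" using assms by simp
    have a: "l * min (P i * y) (E i) \<le> l * (P i * y)" "l * min (P i * y) (E i) \<le> l * E i"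
      by (rule mult_left_mono, simp, fact)+
    have b: "(1 - l) * min (P i * x) (E i) \<le> (1 - l) * (P i * x)"
      "(1 - l) * min (P i * x) (E i) \<le> (1 - l) * E i"
      by (rule mult_left_mono, simp, fact l1)+
    have "P i * (l * y + (1 - l) * x) = l * (P i * y) + (1 - l) * (P i * x)"
      by (simp add: algebra_simps)
    moreover have "l * E i + (1 - l) * E i = E i" by (simp add: algebra_simps)
    ultimately show "l * min (P i * y) (E i) + (1 - l) * min (P i * x) (E i)
                     \<le> min (P i * (l * y + (1 - l) * x)) (E i)"
      using a b by linarith
  qed
  finally show ?thesis .
qed

lemma construct:
  fixes P E :: "'a \<Rightarrow> real" and T :: real and f :: "real \<Rightarrow> real"
  assumes "finite A" "0 \<le> T" "\<forall>i\<in>A. 0 < P i \<and> 0 \<le> E i"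
    "mono_on {0..T} f" "\<forall>t\<in>{0..T}. 0 \<le> f t"
    "\<forall>s\<in>{0..T}. integral {s..T} f \<le> FS P E A (T - s)"
  shows "\<exists>r. (\<forall>i\<in>A. \<forall>t\<in>{0..T}. 0 \<le> r i t \<and> r i t \<le> P i) \<and> (\<forall>i\<in>A. mono_on {0..T} (r i))
     \<and> (\<forall>i\<in>A. integral {0..T} (r i) \<le> E i) \<and> (\<forall>t\<in>{0..T}. (\<Sum>i\<in>A. r i t) \<le> f t)
     \<and> (\<forall>t\<in>{0..<T}. (\<Sum>i\<in>A. r i t) = f t)"
  using assms(1,3-6)
proof (induction A arbitrary: f rule: finite_induct)
  case empty
  have "f t = 0" if t: "t \<in> {0..<T}" for t
  proof -
    have "f t * (T - t) \<le> integral {t..T} f"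
      by (rule int_ge_const_from[OF mono_int[OF empty(2)]])
         (use t empty(2) in \<open>auto intro: mono_onD\<close>)
    moreover have "integral {t..T} f \<le> 0" using empty(4) t by (auto simp: FS_def)
    ultimately have "f t * (T - t) \<le> 0" by simp
    then have "f t \<le> 0" using t by (simp add: mult_le_0_iff)
    then show ?thesis using empty(3) t by force
  qed
  then show ?case using empty by (intro exI[of _ "\<lambda>i t. 0"]) auto
next
  case (insert n A)
  have Pn: "0 < P n" "0 \<le> E n" using insert(4) by auto
  define rr where "rr c t = min (P n) (max 0 (f t - c))" for c t
  define g where "g c = integral {0..T} (rr c)" for c
  have rrm: "mono_on {0..T} (rr c)" for c
    using insert(5) unfolding rr_def mono_on_def by (smt (verit))
  have fT: "0 \<le> f T" using insert(6) assms(2) by auto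
  obtain c where c: "0 \<le> c" "g c \<le> E n" "0 < c \<longrightarrow> g c = E n"
  proof (cases "g 0 \<le> E n")
    case True
    then show ?thesis using that[of 0] by auto
  next
    case False
    have gfT: "g (f T) = 0"
    proof -
      have "g (f T) = integral {0..T} (\<lambda>_. 0::real)"
        unfolding g_def
      proof (rule integral_cong)
        fix t assume "t \<in> {0..T}"
        then have "f t \<le> f T" using insert(5) assms(2) by (auto intro: mono_onD)
        then show "rr (f T) t = 0" unfolding rr_def using Pn by auto
      qed
      then show ?thesis by simp
    qed
    have lip: "g x - g y \<le> T * \<bar>x - y\<bar>" for x y
    proof -
      have "g x - g y = integral {0..T} (\<lambda>t. rr x t - rr y t)"
        unfolding g_def using mono_int[OF rrm, of 0 T] by (subst integral_diff) auto
      also have "\<dots> \<le> integral {0..T} (\<lambda>_. \<bar>x - y\<bar>)"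
      proof (rule integral_le)
        show "(\<lambda>t. rr x t - rr y t) integrable_on {0..T}"
          using mono_int[OF rrm, of 0 T] by (auto intro!: integrable_diff)
        show "\<And>t. t \<in> {0..T} \<Longrightarrow> rr x t - rr y t \<le> \<bar>x - y\<bar>"
          unfolding rr_def by (auto simp: min_def max_def)
      qed auto
      also have "\<dots> = T * \<bar>x - y\<bar>" using assms(2) by simp
      finally show ?thesis .
    qed
    have "T-lipschitz_on {0..f T} g"
    proof (rule lipschitz_onI)
      fix x y
      show "dist (g x) (g y) \<le> T * dist x y"
        using lip[of x y] lip[of y x] unfolding dist_real_def by (simp add: abs_minus_commute abs_le_iff)
    qed (use assms(2) in auto)
    then have "continuous_on {0..f T} g" by (rule lipschitz_on_continuous_on)
    then obtain x where "0 \<le> x" "x \<le> f T" "g x = E n"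
      using IVT2'[of g "f T" "E n" 0] False gfT Pn fT by auto
    then show ?thesis using that[of x] by auto
  qed
  define fr where "fr t = f t - rr c t" for t
  have cond: "\<forall>s\<in>{0..T}. integral {s..T} (\<lambda>t. f t - rr c t) \<le> FS P E A (T - s)"
  proof (rule residual_cond[OF assms(2) insert(5) Pn(1) c(1) Pn(2)])
    show "rr c = (\<lambda>t. min (P n) (max 0 (f t - c)))" unfolding rr_def by simp
    show "FS P E A x \<le> FS P E A y" if "0 \<le> x" "x \<le> y" for x y
      by (rule FS_mono) (use insert(4) that in auto)
    show "l * FS P E A y + (1 - l) * FS P E A x \<le> FS P E A (l * y + (1 - l) * x)"
      if "0 \<le> l" "l \<le> 1" for x y l using FS_conc that by blast
    show "\<forall>s\<in>{0..T}. integral {s..T} f \<le> FS P E A (T - s) + min (P n * (T - s)) (E n)"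
      using insert(7) insert(1,2) by (simp add: FS_def add.commute)
    show "integral {0..T} (rr c) \<le> E n" using c g_def by simp
    show "0 < c \<Longrightarrow> integral {0..T} (rr c) = E n" using c g_def by simp
  qed
  have frm: "mono_on {0..T} fr"
  proof -
    have h: "u - min (P n) (max 0 (u - c)) \<le> v - min (P n) (max 0 (v - c))" if "u \<le> v" for u v
      using that by (auto simp: min_def max_def)
    show ?thesis using insert(5) h unfolding fr_def rr_def mono_on_def by blast
  qed
  have frn: "\<forall>t\<in>{0..T}. 0 \<le> fr t"
    using insert(6) c(1) unfolding fr_def rr_def by (auto simp: min_def max_def)
  obtain r where r: "\<forall>i\<in>A. \<forall>t\<in>{0..T}. 0 \<le> r i t \<and> r i t \<le> P i" "\<forall>i\<in>A. mono_on {0..T} (r i)"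
     "\<forall>i\<in>A. integral {0..T} (r i) \<le> E i" "\<forall>t\<in>{0..T}. (\<Sum>i\<in>A. r i t) \<le> fr t"
     "\<forall>t\<in>{0..<T}. (\<Sum>i\<in>A. r i t) = fr t"
    using insert(3)[of fr] insert(4) frm frn cond unfolding fr_def by auto
  define r' where "r' = r(n := rr c)"
  have sumr': "(\<Sum>i\<in>insert n A. r' i t) = rr c t + (\<Sum>i\<in>A. r i t)" for t
  proof -
    have "(\<Sum>i\<in>A. r' i t) = (\<Sum>i\<in>A. r i t)"
      by (rule sum.cong) (use insert(2) in \<open>auto simp: r'_def\<close>)
    then show ?thesis using insert(1,2) by (simp add: r'_def)
  qed
  show ?case
  proof (rule exI[of _ r'], intro conjI)
    show "\<forall>i\<in>insert n A. \<forall>t\<in>{0..T}. 0 \<le> r' i t \<and> r' i t \<le> P i"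
      using r(1) Pn unfolding r'_def rr_def by auto
    show "\<forall>i\<in>insert n A. mono_on {0..T} (r' i)"
      using r(2) rrm unfolding r'_def by auto
    show "\<forall>i\<in>insert n A. integral {0..T} (r' i) \<le> E i"
      using r(3) c(2) unfolding r'_def g_def by auto
    show "\<forall>t\<in>{0..T}. (\<Sum>i\<in>insert n A. r' i t) \<le> f t"
      using r(4) unfolding sumr' fr_def by fastforce
    show "\<forall>t\<in>{0..<T}. (\<Sum>i\<in>insert n A. r' i t) = f t"
      using r(5) unfolding sumr' fr_def by fastforce
  qed
qed


lemma comb:
  fixes S S1 S2 :: "'a set" and P E0 x :: "'a \<Rightarrow> real" and b s k :: real
  assumes "finite S" "S1 \<subseteq> S" "S2 = S - S1" "0 \<le> s"
    "\<forall>i\<in>S2. E0 i - x i \<le> P i * s"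
    "(\<Sum>i\<in>S. x i) \<le> (\<Sum>i\<in>S. E0 i) - k * s" "k = (\<Sum>i\<in>S2. P i)"
    "\<forall>i\<in>S1. x i \<le> E0 i" "\<forall>i\<in>S. 0 < P i"
    "(\<forall>i\<in>S1. E0 i \<le> P i * b) \<or> (\<forall>i\<in>S2. P i * b \<le> E0 i)"
  shows "(\<Sum>i\<in>S. min (P i * b) (x i)) \<le> (\<Sum>i\<in>S. min (P i * b) (E0 i))"
  using assms(10)
proof
  assume h: "\<forall>i\<in>S2. P i * b \<le> E0 i"
  show ?thesis
  proof (rule sum_mono)
    fix i assume i: "i \<in> S"
    show "min (P i * b) (x i) \<le> min (P i * b) (E0 i)"
    proof (cases "i \<in> S1")
      case True then show ?thesis using assms(8) by force
    next
      case False then have "i \<in> S2" using i assms(3) by auto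
      then show ?thesis using h by force
    qed
  qed
next
  assume h: "\<forall>i\<in>S1. E0 i \<le> P i * b"
  define \<delta> where "\<delta> i = x i - E0 i + (if i \<in> S2 then P i * s else 0)" for i
  have "(\<Sum>i\<in>S. min (P i * b) (x i)) \<le> (\<Sum>i\<in>S. min (P i * b) (E0 i) + \<delta> i)"
  proof (rule sum_mono)
    fix i assume i: "i \<in> S"
    show "min (P i * b) (x i) \<le> min (P i * b) (E0 i) + \<delta> i"
    proof (cases "i \<in> S1")
      case True
      then have "i \<notin> S2" using assms(3) by auto
      then show ?thesis using True h unfolding \<delta>_def by (auto simp: min_def)
    next
      case False then have i2: "i \<in> S2" using i assms(3) by auto
      have "0 \<le> P i * s" using assms(9,4) i by (simp add: less_imp_le)
      then show ?thesis using i2 assms(5) unfolding \<delta>_def by (auto simp: min_def)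
    qed
  qed
  also have "\<dots> = (\<Sum>i\<in>S. min (P i * b) (E0 i)) + (\<Sum>i\<in>S. \<delta> i)"
    by (simp add: sum.distrib)
  also have "(\<Sum>i\<in>S. \<delta> i) = (\<Sum>i\<in>S. x i) - (\<Sum>i\<in>S. E0 i) + (\<Sum>i\<in>S. if i \<in> S2 then P i * s else 0)"
    unfolding \<delta>_def by (simp add: sum.distrib sum_subtractf)
  also have "(\<Sum>i\<in>S. if i \<in> S2 then P i * s else 0) = (\<Sum>i\<in>S \<inter> S2. P i * s)"
    using sum.inter_restrict[OF assms(1), of "\<lambda>i. P i * s" S2] by simp
  also have "S \<inter> S2 = S2" using assms(3) by auto
  also have "(\<Sum>i\<in>S2. P i * s) = k * s" using assms(7) by (simp add: sum_distrib_right)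
  finally show ?thesis using assms(6) by linarith
qed

lemma div_eta: "(r::real) < 0 \<Longrightarrow> 0 < e \<Longrightarrow> e \<le> 1 \<Longrightarrow> r / e \<le> r"
  by (simp add: divide_le_eq mult_le_cancel_left1)

lemma meas_ext:
  fixes g :: "real \<Rightarrow> real"
  assumes "mono_on {0..T} g"
  shows "(\<lambda>t. if t \<in> {0..T} then g t else 0) \<in> borel_measurable lebesgue"
proof -
  have "g \<in> borel_measurable (restrict_space borel {0..T})"
    by (rule borel_measurable_mono_on_fnc[OF assms])
  then have "(\<lambda>x. indicator {0..T} x *\<^sub>R g x) \<in> borel_measurable borel"
    by (subst (asm) borel_measurable_restrict_space_iff) auto
  then have "(\<lambda>t. if t \<in> {0..T} then g t else 0) \<in> borel_measurable borel"
    by (rule measurable_cong[THEN iffD1, rotated]) (auto simp: indicator_def)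
  then have "(\<lambda>t. if t \<in> {0..T} then g t else 0) \<in> borel_measurable lborel"
    by simp
  then show ?thesis by (rule measurable_completion)
qed


theorem theorem4:
  fixes S :: "'a set"
    and Ebar P P' eta E0 :: "'a \<Rightarrow> real"
    and d :: "real \<Rightarrow> real" and T :: real
    and S' S1 S2 :: "'a set" and u0 :: ereal and k :: real
  assumes "finite S"
    and "\<forall>i\<in>S. 0 < Ebar i \<and> 0 < P i \<and> 0 \<le> P' i \<and> 0 < eta i \<and> eta i \<le> 1"
    and "\<forall>i\<in>S. 0 \<le> E0 i \<and> E0 i \<le> Ebar i"
    and "S' = {i\<in>S. E0 i < Ebar i}"
    and "u0 = (if S' = {} then \<infinity> else ereal (Min ((\<lambda>i. E0 i / P i) ` S')))"
    and "S1 = {i\<in>S. ereal (Ebar i / P i) \<le> u0}"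
    and "S2 = S - S1"
    and "k = (\<Sum>i\<in>S2. P i)"
    and "T > 0"
    and "\<forall>t\<in>{0..T}. 0 \<le> d t"
    and "set_integrable lborel {0..T} d"
    and "mono_on {0..T} d"
    and "d 0 \<ge> k"
    and "\<exists>r. policy S Ebar P P' eta E0 d T r \<and> completely_serves S eta r d {0..T}"
  shows "\<exists>r. policy S Ebar P P' eta E0 d T r \<and> no_cross_charging S r T
             \<and> completely_serves S eta r d {0..T}"
proof -
  obtain r where pol: "policy S Ebar P P' eta E0 d T r" and cs: "completely_serves S eta r d {0..T}"
    using assms(14) by blast
  have rm: "\<forall>i\<in>S. r i \<in> borel_measurable lebesgue"
    and en: "\<forall>i\<in>S. \<forall>t\<in>{0..T}. 0 \<le> energy E0 r i t \<and> energy E0 r i t \<le> Ebar i"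
    and rb: "\<forall>i\<in>S. \<forall>t\<in>{0..T}. - P' i \<le> r i t \<and> r i t \<le> P i"
    using pol unfolding policy_def by auto
  have T0: "0 \<le> T" using assms(9) by simp
  have ri: "r i integrable_on {a..b}" if i: "i \<in> S" "0 \<le> a" "b \<le> T" for i a b
  proof (rule measurable_bounded_by_integrable_imp_integrable[where g="\<lambda>_. max (P i) (P' i)"])
    show "r i \<in> borel_measurable (lebesgue_on {a..b})"
      using rm i by (auto intro: measurable_restrict_space1)
    show "(\<lambda>_. max (P i) (P' i)) integrable_on {a..b}" by auto
    show "norm (r i x) \<le> max (P i) (P' i)" if "x \<in> {a..b}" for x
    proof -
      have "x \<in> {0..T}" using i that by auto
      then have "- P' i \<le> r i x" "r i x \<le> P i" using rb i by auto
      then show ?thesis by (simp add: abs_le_iff max_def)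
    qed
    show "{a..b} \<in> sets lebesgue" by simp
  qed
  have di: "d integrable_on {a..b}" if "0 \<le> a" "b \<le> T" for a b
    using mono_int[OF assms(12) that] .
  obtain N where N: "negligible N" "{t. \<not> (t \<in> {0..T} \<longrightarrow> served S eta r t = d t)} \<subseteq> N"
    using cs unfolding completely_serves_def eventually_ae_filter_negligible by blast
  have srv: "served S eta r t \<le> (\<Sum>i\<in>S. r i t)" for t
    unfolding served_def
  proof (rule sum_mono)
    fix i assume i: "i \<in> S"
    show "(if 0 \<le> r i t then r i t else r i t / eta i) \<le> r i t"
      using div_eta[of "r i t" "eta i"] assms(2) i by auto
  qed
  have win: "integral {a..b} d \<le> (\<Sum>i\<in>S. integral {a..b} (r i))"
    if ab: "0 \<le> a" "a \<le> b" "b \<le> T" for a b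
  proof -
    let ?g = "\<lambda>t. if t \<in> N then (\<Sum>i\<in>S. r i t) else d t"
    have "integral {a..b} d = integral {a..b} ?g" by (rule integral_spike[OF N(1)]) auto
    moreover have gi: "?g integrable_on {a..b}"
      by (rule integrable_spike[OF di[of a b] N(1)]) (use ab in auto)
    moreover have "integral {a..b} ?g \<le> integral {a..b} (\<lambda>t. \<Sum>i\<in>S. r i t)"
    proof (rule integral_le[OF gi])
      show "(\<lambda>t. \<Sum>i\<in>S. r i t) integrable_on {a..b}"
        using ri ab by (auto intro!: integrable_sum assms(1))
      fix t assume t: "t \<in> {a..b}"
      show "?g t \<le> (\<Sum>i\<in>S. r i t)"
      proof (cases "t \<in> N")
        case False
        have "t \<in> {0..T}" using t ab by auto
        then have "served S eta r t = d t" using N(2) False by blast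
        then show ?thesis using srv[of t] False by auto
      qed simp
    qed
    moreover have "integral {a..b} (\<lambda>t. \<Sum>i\<in>S. r i t) = (\<Sum>i\<in>S. integral {a..b} (r i))"
      by (rule integral_sum[OF assms(1)]) (use ri ab in auto)
    ultimately show ?thesis by linarith
  qed
  have finS': "finite S'" using assms(1,4) by simp
  have S1full: "\<forall>i\<in>S1. E0 i = Ebar i"
  proof
    fix i assume i: "i \<in> S1"
    show "E0 i = Ebar i"
    proof (rule ccontr)
      assume ne: "E0 i \<noteq> Ebar i"
      then have iS': "i \<in> S'" using i assms(3,4,6) by force
      then have ne': "S' \<noteq> {}" by auto
      have "Min ((\<lambda>i. E0 i / P i) ` S') \<le> E0 i / P i" using iS' finS' by (auto intro: Min_le)
      moreover have "E0 i / P i < Ebar i / P i"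
      proof -
        have iS: "i \<in> S" using i assms(6) by auto
        then have "E0 i < Ebar i" "0 < P i" using ne assms(2,3) by (auto simp: less_le)
        then show ?thesis by (rule divide_strict_right_mono)
      qed
      moreover have "ereal (Ebar i / P i) \<le> u0" using i assms(6) by auto
      ultimately show False using assms(5) ne' by auto
    qed
  qed
  have casec: "(\<forall>i\<in>S1. E0 i \<le> P i * b) \<or> (\<forall>i\<in>S2. P i * b \<le> E0 i)" for b
  proof (cases "u0 \<le> ereal b")
    case True
    have "E0 i \<le> P i * b" if i: "i \<in> S1" for i
    proof -
      have iS: "i \<in> S" using i assms(6) by auto
      have "ereal (Ebar i / P i) \<le> u0" using i assms(6) by auto
      then have "ereal (Ebar i / P i) \<le> ereal b" using True by (rule order_trans)
      then have "Ebar i / P i \<le> b" by simp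
      then have "Ebar i \<le> P i * b" using assms(2) iS by (simp add: pos_divide_le_eq mult.commute)
      then show ?thesis using S1full i by simp
    qed
    then show ?thesis by blast
  next
    case False
    have "P i * b \<le> E0 i" if i: "i \<in> S2" for i
    proof -
      have iS: "i \<in> S" and ni: "\<not> ereal (Ebar i / P i) \<le> u0" using i assms(6,7) by auto
      have "b < E0 i / P i"
      proof (cases "E0 i < Ebar i")
        case True
        then have iS': "i \<in> S'" using iS assms(4) by auto
        then have m: "Min ((\<lambda>i. E0 i / P i) ` S') \<le> E0 i / P i" using finS' by (auto intro: Min_le)
        have "u0 = ereal (Min ((\<lambda>i. E0 i / P i) ` S'))" using assms(5) iS' by auto
        then have "u0 \<le> ereal (E0 i / P i)" using m by simp
        then have "ereal b < ereal (E0 i / P i)" using \<open>\<not> u0 \<le> ereal b\<close> by (meson not_le order_less_le_trans)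
        then show ?thesis by simp
      next
        case False
        then have "E0 i = Ebar i" using assms(3) iS by force
        have "ereal b < ereal (Ebar i / P i)" using ni \<open>\<not> u0 \<le> ereal b\<close> by (meson not_le less_trans)
        then show ?thesis using \<open>E0 i = Ebar i\<close> by simp
      qed
      then show ?thesis using assms(2) iS by (simp add: less_divide_eq mult.commute)
    qed
    then show ?thesis by blast
  qed
  have cond: "\<forall>s\<in>{0..T}. integral {s..T} d \<le> FS P E0 S (T - s)"
  proof
    fix s assume s: "s \<in> {0..T}"
    define x where "x i = E0 i - integral {0..s} (r i)" for i
    define y where "y i = integral {s..T} (r i)" for i
    have cmb: "integral {0..T} (r i) = integral {0..s} (r i) + y i" if "i \<in> S" for i
      using Henstock_Kurzweil_Integration.integral_combine[of 0 s T "r i"] s ri[OF that, of 0 T]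
      unfolding y_def by auto
    have yx: "y i \<le> x i" if i: "i \<in> S" for i
    proof -
      have "T \<in> {0..T}" using T0 by simp
      then have "0 \<le> E0 i - integral {0..T} (r i)" using en i unfolding energy_def by blast
      then show ?thesis using cmb[OF i] unfolding x_def by simp
    qed
    have yP: "y i \<le> P i * (T - s)" if i: "i \<in> S" for i
      unfolding y_def by (rule int_le_const_upto[OF ri[OF i]]) (use s rb i in auto)
    have x0: "0 \<le> x i" "x i \<le> Ebar i" if i: "i \<in> S" for i
      using en i s unfolding energy_def x_def by auto
    have xs: "E0 i - x i \<le> P i * s" if i: "i \<in> S" for i
    proof -
      have "integral {0..s} (r i) \<le> P i * (s - 0)"
        by (rule int_le_const_upto[OF ri[OF i]]) (use s rb i in auto)
      then show ?thesis unfolding x_def by simp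
    qed
    have "k * (s - 0) \<le> integral {0..s} d"
    proof (rule int_ge_const_from[OF di])
      show "\<forall>t\<in>{0<..s}. k \<le> d t"
      proof
        fix t assume t: "t \<in> {0<..s}"
        have "d 0 \<le> d t" using assms(12) t s by (auto intro: mono_onD)
        then show "k \<le> d t" using assms(13) by simp
      qed
    qed (use s in auto)
    moreover have "integral {0..s} d \<le> (\<Sum>i\<in>S. integral {0..s} (r i))" using win[of 0 s] s by auto
    moreover have "(\<Sum>i\<in>S. x i) = (\<Sum>i\<in>S. E0 i) - (\<Sum>i\<in>S. integral {0..s} (r i))"
      unfolding x_def by (simp add: sum_subtractf)
    ultimately have sumx: "(\<Sum>i\<in>S. x i) \<le> (\<Sum>i\<in>S. E0 i) - k * s" by simp
    have "integral {s..T} d \<le> (\<Sum>i\<in>S. y i)" unfolding y_def using win[of s T] s by auto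
    also have "\<dots> \<le> (\<Sum>i\<in>S. min (P i * (T - s)) (x i))"
      by (rule sum_mono) (use yx yP in auto)
    also have "\<dots> \<le> (\<Sum>i\<in>S. min (P i * (T - s)) (E0 i))"
    proof (rule comb[OF assms(1) _ assms(7) _ _ sumx assms(8)])
      show "S1 \<subseteq> S" using assms(6) by auto
      show "0 \<le> s" using s by auto
      show "\<forall>i\<in>S2. E0 i - x i \<le> P i * s" using xs assms(7) by auto
      show "\<forall>i\<in>S1. x i \<le> E0 i" using x0 S1full assms(6) by auto
      show "\<forall>i\<in>S. 0 < P i" using assms(2) by auto
      show "(\<forall>i\<in>S1. E0 i \<le> P i * (T - s)) \<or> (\<forall>i\<in>S2. P i * (T - s) \<le> E0 i)" by (rule casec)
    qed
    finally show "integral {s..T} d \<le> FS P E0 S (T - s)" unfolding FS_def .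
  qed
  obtain r0 where r0: "\<forall>i\<in>S. \<forall>t\<in>{0..T}. 0 \<le> r0 i t \<and> r0 i t \<le> P i" "\<forall>i\<in>S. mono_on {0..T} (r0 i)"
     "\<forall>i\<in>S. integral {0..T} (r0 i) \<le> E0 i" "\<forall>t\<in>{0..T}. (\<Sum>i\<in>S. r0 i t) \<le> d t"
     "\<forall>t\<in>{0..<T}. (\<Sum>i\<in>S. r0 i t) = d t"
    using construct[OF assms(1) T0 _ assms(12) assms(10) cond] assms(2,3) by force
  define r' where "r' i t = (if t \<in> {0..T} then r0 i t else 0)" for i t
  have intr': "integral {0..t} (r' i) = integral {0..t} (r0 i)" if "t \<in> {0..T}" for i t
    by (rule integral_cong) (use that in \<open>auto simp: r'_def\<close>)
  have intb: "0 \<le> integral {0..t} (r0 i) \<and> integral {0..t} (r0 i) \<le> E0 i" if i: "i \<in> S" "t \<in> {0..T}" for i t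
  proof -
    have m: "mono_on {0..T} (r0 i)" using r0(2) i by auto
    have a: "0 \<le> integral {0..t} (r0 i)"
      by (rule integral_nonneg[OF mono_int[OF m]]) (use r0(1) i in auto)
    have b: "0 \<le> integral {t..T} (r0 i)"
      by (rule integral_nonneg[OF mono_int[OF m]]) (use r0(1) i in auto)
    have "integral {0..T} (r0 i) = integral {0..t} (r0 i) + integral {t..T} (r0 i)"
      using Henstock_Kurzweil_Integration.integral_combine[of 0 t T "r0 i"] i mono_int[OF m, of 0 T] by auto
    then show ?thesis using a b r0(3) i by auto
  qed
  have srv': "served S eta r' t = (\<Sum>i\<in>S. r0 i t)" if "t \<in> {0..T}" for t
    unfolding served_def by (rule sum.cong) (use that r0(1) in \<open>auto simp: r'_def\<close>)
  show ?thesis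
  proof (rule exI[of _ r'], intro conjI)
    show "policy S Ebar P P' eta E0 d T r'"
      unfolding policy_def
    proof (intro conjI ballI)
      fix i assume i: "i \<in> S"
      show "r' i \<in> borel_measurable lebesgue"
        unfolding r'_def using meas_ext[of T "r0 i"] r0(2) i by auto
      fix t assume t: "t \<in> {0..T}"
      show "0 \<le> energy E0 r' i t" "energy E0 r' i t \<le> Ebar i"
        unfolding energy_def intr'[OF t] using intb[OF i t] assms(3) i by auto
      show "- P' i \<le> r' i t" "r' i t \<le> P i"
        using r0(1) i t assms(2) unfolding r'_def by force+
    next
      fix t assume t: "t \<in> {0..T}"
      show "0 \<le> served S eta r' t" unfolding srv'[OF t] using r0(1) t by (auto intro: sum_nonneg)
      show "served S eta r' t \<le> d t" unfolding srv'[OF t] using r0(4) t by auto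
    qed
    show "no_cross_charging S r' T"
      unfolding no_cross_charging_def r'_def using r0(1) by auto
    show "completely_serves S eta r' d {0..T}"
      unfolding completely_serves_def eventually_ae_filter_negligible
    proof (intro exI[of _ "{T}"] conjI)
      show "negligible {T}" by simp
      show "{t. \<not> (t \<in> {0..T} \<longrightarrow> served S eta r' t = d t)} \<subseteq> {T}"
        using srv' r0(5) by fastforce
    qed
  qed
qed

end
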